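(* Let $G$ be a finite abelian group, $k\ge1$, and let $\varphi$ be an automorphism of finite order of the restricted wreath product $G\wr\mathbb{Z}^k=\Sigma\rtimes_\alpha\mathbb{Z}^k$. Let $\varphi'=\varphi|_\Sigma$. Then $R(\varphi')$ equals either $1$ or $\infty$.
   Context: Reidemeister number $R(\psi)$ of an endomorphism $\psi$ of a group $H$: the number of classes of $x\sim gx\psi(g^{-1})$, $g\in H$ (possibly $\infty$); for abelian $H$, $R(\psi)=|\mathrm{Coker}(\mathrm{Id}-\psi)|$. $\Sigma=\bigoplus_{x\in\mathbb{Z}^k}G_x$, each $G_x$ a copy of $G$, $\alpha(x)(g_y)=g_{x+y}$; $\Sigma$ is the torsion subset of $G\wr\mathbb{Z}^k$ and hence $\varphi$-invariant. *)

theory Defs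
  imports "HOL-Algebra.Algebra" "HOL-Library.Extended_Nat"
begin

text \<open>Z^k is represented by integer lists of length k; an element of Sigma = (+)_{x in Z^k} G_x
  is a finitely supported function f :: int list => 'a with values in carrier G
  (normalised to the identity outside lists of length k).\<close>

definition zvec :: "nat \<Rightarrow> int list set" where
  "zvec k = {x. length x = k}"

definition vadd :: "int list \<Rightarrow> int list \<Rightarrow> int list" where
  "vadd x y = map2 (+) x y"

definition vsub :: "int list \<Rightarrow> int list \<Rightarrow> int list" where
  "vsub x y = map2 (-) x y"

definition sigma_carrier :: "nat \<Rightarrow> ('a, 'b) monoid_scheme \<Rightarrow> (int list \<Rightarrow> 'a) set" where
  "sigma_carrier k G = {f. (\<forall>z. f z \<in> carrier G) \<and> (\<forall>z. length z \<noteq> k \<longrightarrow> f z = \<one>\<^bsub>G\<^esub>)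
                          \<and> finite {z. f z \<noteq> \<one>\<^bsub>G\<^esub>}}"

text \<open>alpha(x)(g_y) = g_{x+y}: shifting the support by x.\<close>
definition shift :: "nat \<Rightarrow> ('a, 'b) monoid_scheme \<Rightarrow> int list \<Rightarrow> (int list \<Rightarrow> 'a) \<Rightarrow> (int list \<Rightarrow> 'a)" where
  "shift k G x f = (\<lambda>z. if length z = k then f (vsub z x) else \<one>\<^bsub>G\<^esub>)"

definition wreath :: "('a, 'b) monoid_scheme \<Rightarrow> nat \<Rightarrow> ((int list \<Rightarrow> 'a) \<times> int list) monoid" where
  "wreath G k = \<lparr> carrier = sigma_carrier k G \<times> zvec k,
     monoid.mult = (\<lambda>(f, x) (g, y). (\<lambda>z. f z \<otimes>\<^bsub>G\<^esub> shift k G x g z, vadd x y)),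
     one = (\<lambda>_. \<one>\<^bsub>G\<^esub>, replicate k 0) \<rparr>"

definition wreath_base :: "('a, 'b) monoid_scheme \<Rightarrow> nat \<Rightarrow> ((int list \<Rightarrow> 'a) \<times> int list) monoid" where
  "wreath_base G k = (wreath G k) \<lparr> carrier := sigma_carrier k G \<times> {replicate k 0} \<rparr>"

definition twisted_conj :: "('c, 'd) monoid_scheme \<Rightarrow> ('c \<Rightarrow> 'c) \<Rightarrow> ('c \<times> 'c) set" where
  "twisted_conj H psi = {(x, y). x \<in> carrier H \<and> y \<in> carrier H \<and>
      (\<exists>g \<in> carrier H. y = g \<otimes>\<^bsub>H\<^esub> x \<otimes>\<^bsub>H\<^esub> inv\<^bsub>H\<^esub> (psi g))}"

definition reidemeister_number :: "('c, 'd) monoid_scheme \<Rightarrow> ('c \<Rightarrow> 'c) \<Rightarrow> enat" where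
  "reidemeister_number H psi =
     (if finite (carrier H // twisted_conj H psi)
      then enat (card (carrier H // twisted_conj H psi)) else \<infinity>)"

end

theory Submission
  imports Defs
begin

lemma funpow_cycle:
  fixes f :: "'x \<Rightarrow> 'x"
  assumes "finite S" "card S \<le> L" "\<forall>j. (f^^j) x \<in> S"
  shows "(f^^(fact L)) x = (f^^(fact L + fact L)) x"
proof -
  have "\<not> inj_on (\<lambda>j. (f^^j) x) {..L}"
  proof
    assume inj: "inj_on (\<lambda>j. (f^^j) x) {..L}"
    have "(\<lambda>j. (f^^j) x) ` {..L} \<subseteq> S" using assms(3) by auto
    hence "card ((\<lambda>j. (f^^j) x) ` {..L}) \<le> card S" using assms(1) card_mono by blast
    moreover have "card ((\<lambda>j. (f^^j) x) ` {..L}) = Suc L" using card_image[OF inj] by simp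
    ultimately show False using assms(2) by simp
  qed
  then obtain i j where ij: "i \<le> L" "j \<le> L" "i < j" "(f^^i) x = (f^^j) x"
    unfolding inj_on_def by (metis atMost_iff linorder_neqE_nat)
  define d where "d = j - i"
  have d0: "d > 0" and jd: "j = i + d" using ij by (auto simp: d_def)
  have step: "(f^^(i + m)) x = (f^^(i + m + d)) x" for m
  proof -
    have "(f^^(i+m)) x = (f^^(m+i)) x" by (simp add: add.commute)
    also have "\<dots> = (f^^m) ((f^^i) x)" by (simp add: funpow_add)
    also have "\<dots> = (f^^m) ((f^^j) x)" using ij by simp
    also have "\<dots> = (f^^(m+j)) x" by (simp add: funpow_add)
    also have "\<dots> = (f^^(i+m+d)) x" using jd by (simp add: ac_simps)
    finally show ?thesis .
  qed
  have iter: "(f^^(i + m)) x = (f^^(i + m + q*d)) x" for m q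
  proof (induction q)
    case 0 then show ?case by simp
  next
    case (Suc q)
    have e: "i + m + Suc q * d = i + (m + q*d) + d" by simp
    have e2: "i + m + q * d = i + (m + q*d)" by simp
    show ?case using Suc.IH step[of "m + q*d"] unfolding e e2 by simp
  qed
  have "d dvd (fact L :: nat)" using d0 ij by (intro dvd_fact) (auto simp: d_def)
  then obtain q where q: "(fact L :: nat) = d * q" by blast
  have "i \<le> (fact L :: nat)" using ij fact_ge_self[of L] by linarith
  then obtain m where m: "(fact L :: nat) = i + m" using le_Suc_ex by blast
  have e3: "(fact L :: nat) + fact L = i + m + q * d" using m q by (simp add: mult.commute)
  show ?thesis unfolding e3 using iter[of m q] m by simp
qed

context comm_group
begin

lemma hom_finprod_self:
  assumes h: "h \<in> hom G G" and f: "f \<in> A \<rightarrow> carrier G"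
  shows "h (finprod G f A) = finprod G (\<lambda>i. h (f i)) A"
  using f
proof (induction A rule: infinite_finite_induct)
  case (infinite A) then show ?case using hom_one[OF h is_group is_group] by simp
next
  case empty then show ?case using hom_one[OF h is_group is_group] by simp
next
  case (insert a A)
  have hc: "\<And>x. x \<in> carrier G \<Longrightarrow> h x \<in> carrier G" using h by (auto simp: hom_def)
  from insert have fa: "f a \<in> carrier G" and fA: "f \<in> A \<rightarrow> carrier G" by auto
  have "h (finprod G f (insert a A)) = h (f a \<otimes> finprod G f A)"
    using insert fa fA by simp
  also have "\<dots> = h (f a) \<otimes> h (finprod G f A)" using hom_mult[OF h] fa fA by simp
  also have "\<dots> = h (f a) \<otimes> finprod G (\<lambda>i. h (f i)) A" using insert fA by simp
  also have "\<dots> = finprod G (\<lambda>i. h (f i)) (insert a A)"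
    using insert fa fA hc by (subst finprod_insert) (auto simp: Pi_def)
  finally show ?case .
qed

lemma powmod:
  fixes m E :: nat
  assumes "x \<in> carrier G" "x [^] E = \<one>"
  shows "x [^] (m mod E) = x [^] m"
proof -
  have em: "E * (m div E) + m mod E = m" using div_mult_mod_eq[of m E] by (simp add: mult.commute)
  have "x [^] m = x [^] (E * (m div E) + m mod E)" unfolding em ..
  also have "\<dots> = x [^] (E * (m div E)) \<otimes> x [^] (m mod E)" using assms(1) by (simp add: nat_pow_mult)
  also have "\<dots> = (x [^] E) [^] (m div E) \<otimes> x [^] (m mod E)" using assms(1) by (simp add: nat_pow_pow)
  also have "\<dots> = x [^] (m mod E)" using assms by simp
  finally show ?thesis by (rule sym)
qed

lemma finprod_cyc:
  assumes f: "\<And>i. f i \<in> carrier G" and fn: "f n = f 0"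
  shows "finprod G (\<lambda>i. f (Suc i)) {..<n} = finprod G f {..<n}"
proof (cases n)
  case 0 then show ?thesis by simp
next
  case (Suc m)
  have fP: "f \<in> {..Suc m} \<rightarrow> carrier G" using f by auto
  have c: "{..m} = {..<Suc m}" by auto
  have a: "finprod G f {..Suc m} = finprod G (\<lambda>i. f (Suc i)) {..<Suc m} \<otimes> f 0"
    using finprod_Suc2[OF fP] unfolding c .
  have b: "finprod G f {..Suc m} = f 0 \<otimes> finprod G f {..< Suc m}"
    using finprod_Suc3[OF fP] fn Suc by simp
  have cl: "finprod G (\<lambda>i. f (Suc i)) {..<Suc m} \<in> carrier G" "finprod G f {..< Suc m} \<in> carrier G"
    using f by (auto intro: finprod_closed)
  have "finprod G (\<lambda>i. f (Suc i)) {..<Suc m} \<otimes> f 0 = finprod G f {..< Suc m} \<otimes> f 0"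
    using a b m_comm[OF f[of 0] cl(2)] by simp
  then show ?thesis using Suc f r_cancel cl by simp
qed


lemma fitting_main:
  fixes phi :: "'a \<Rightarrow> 'a" and n E :: nat
  assumes phi: "phi \<in> hom G G" and n0: "n > 0" and per: "\<And>x. x \<in> carrier G \<Longrightarrow> (phi^^n) x = x"
    and E0: "E > 0" and expE: "\<And>x. x \<in> carrier G \<Longrightarrow> x [^] E = \<one>"
    and Ffin: "finite F" and Fsub: "F \<subseteq> carrier G"
    and cov: "\<And>a. a \<in> carrier G \<Longrightarrow> \<exists>f\<in>F. \<exists>b\<in>carrier G. a = f \<otimes> (b \<otimes> inv (phi b))"
    and fixtriv: "finite {x \<in> carrier G. phi x = x} \<Longrightarrow> \<forall>x\<in>carrier G. phi x = x \<longrightarrow> x = \<one>"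
  shows "\<forall>a\<in>carrier G. \<exists>b\<in>carrier G. a = b \<otimes> inv (phi b)"
proof -
  interpret ph: group_hom G G phi
    by (simp add: group_hom_def group_hom_axioms_def phi is_group)
  define T where "T = (\<lambda>b. b \<otimes> inv (phi b))"
  have Tc: "\<And>x. x \<in> carrier G \<Longrightarrow> T x \<in> carrier G" by (simp add: T_def)
  have Tm: "\<And>x y. x \<in> carrier G \<Longrightarrow> y \<in> carrier G \<Longrightarrow> T (x \<otimes> y) = T x \<otimes> T y"
    by (simp add: T_def inv_mult m_ac)
  have T1: "T \<one> = \<one>" by (simp add: T_def)
  have Tinv: "\<And>x. x \<in> carrier G \<Longrightarrow> T (inv x) = inv (T x)"
    by (simp add: T_def inv_mult m_ac)
  have Tpc: "\<And>j x. x \<in> carrier G \<Longrightarrow> (T^^j) x \<in> carrier G"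
  proof -
    fix j x assume "x \<in> carrier G" then show "(T^^j) x \<in> carrier G" by (induction j) (auto simp: Tc)
  qed
  have Tpm: "\<And>j x y. x \<in> carrier G \<Longrightarrow> y \<in> carrier G \<Longrightarrow> (T^^j) (x \<otimes> y) = (T^^j) x \<otimes> (T^^j) y"
  proof -
    fix j x y assume "x \<in> carrier G" "y \<in> carrier G"
    then show "(T^^j) (x \<otimes> y) = (T^^j) x \<otimes> (T^^j) y" by (induction j) (auto simp: Tm Tpc)
  qed
  have Tp1: "\<And>j. (T^^j) \<one> = \<one>"
  proof -
    fix j show "(T^^j) \<one> = \<one>" by (induction j) (auto simp: T1)
  qed
  have phipc: "\<And>i x. x \<in> carrier G \<Longrightarrow> (phi^^i) x \<in> carrier G"
  proof -
    fix i x assume "x \<in> carrier G" then show "(phi^^i) x \<in> carrier G" by (induction i) auto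
  qed
  define Op where "Op = (\<lambda>s (c::nat \<Rightarrow> nat). finprod G (\<lambda>i. (phi^^i) s [^] c i) {..<n})"
  have Opc: "\<And>s (c::nat\<Rightarrow>nat). s \<in> carrier G \<Longrightarrow> Op s c \<in> carrier G"
    unfolding Op_def by (intro finprod_closed) (auto simp: phipc)
  have Op_mult: "\<And>s (c::nat\<Rightarrow>nat) d. s \<in> carrier G \<Longrightarrow> Op s c \<otimes> Op s d = Op s (\<lambda>i. c i + d i)"
    unfolding Op_def by (subst finprod_multf[symmetric]) (auto simp: phipc nat_pow_mult)
  have Op_E: "\<And>s (c::nat\<Rightarrow>nat). s \<in> carrier G \<Longrightarrow> Op s (\<lambda>i. E * c i) = \<one>"
    unfolding Op_def by (intro finprod_one_eqI) (simp add: phipc expE nat_pow_pow[symmetric])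
  have Op_inv: "\<And>s (c::nat\<Rightarrow>nat). s \<in> carrier G \<Longrightarrow> inv (Op s c) = Op s (\<lambda>i. (E - 1) * c i)"
  proof -
    fix s and c :: "nat \<Rightarrow> nat" assume s: "s \<in> carrier G"
    have e: "(\<lambda>i. (E - 1) * c i + c i) = (\<lambda>i. E * c i)" using E0
      by (auto simp: algebra_simps)
    have "Op s (\<lambda>i. (E - 1) * c i) \<otimes> Op s c = \<one>" using Op_mult[OF s] Op_E[OF s] e by simp
    then show "inv (Op s c) = Op s (\<lambda>i. (E - 1) * c i)" using inv_equality Opc[OF s] by blast
  qed
  have Op_phi: "\<And>s (c::nat\<Rightarrow>nat). s \<in> carrier G \<Longrightarrow> phi (Op s c) = Op s (\<lambda>j. if j = 0 then c (n - 1) else c (j - 1))"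
  proof -
    fix s and c :: "nat \<Rightarrow> nat" assume s: "s \<in> carrier G"
    define g where "g = (\<lambda>j. (phi^^j) s [^] (if j = 0 then c (n - 1) else c (j - 1)))"
    have gc: "\<And>j. g j \<in> carrier G" by (simp add: g_def phipc s)
    have "phi (Op s c) = finprod G (\<lambda>i. phi ((phi^^i) s [^] c i)) {..<n}"
      unfolding Op_def by (rule hom_finprod_self[OF phi]) (auto simp: phipc s)
    also have "\<dots> = finprod G (\<lambda>i. g (Suc i)) {..<n}"
      by (intro finprod_cong') (auto simp: g_def ph.hom_nat_pow phipc s)
    also have "\<dots> = finprod G g {..<n}"
      by (rule finprod_cyc[OF gc]) (simp add: g_def per s n0)
    finally show "phi (Op s c) = Op s (\<lambda>j. if j = 0 then c (n - 1) else c (j - 1))"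
      by (simp add: Op_def g_def)
  qed
  have Op_T: "\<And>s (c::nat\<Rightarrow>nat). s \<in> carrier G \<Longrightarrow> T (Op s c) = Op s (\<lambda>i. c i + (E - 1) * (if i = 0 then c (n - 1) else c (i - 1)))"
    unfolding T_def by (simp add: Op_phi Op_inv Op_mult)
  have Op_s: "\<And>s. s \<in> carrier G \<Longrightarrow> Op s (\<lambda>i. if i = 0 then 1 else 0) = s"
  proof -
    fix s assume s: "s \<in> carrier G"
    have "Op s (\<lambda>i. if i = 0 then 1 else 0) = finprod G (\<lambda>j. if 0 = j then (phi^^j) s else \<one>) {..<n}"
      unfolding Op_def by (intro finprod_cong') (auto simp: phipc s)
    also have "\<dots> = (phi^^0) s" using n0 by (intro finprod_singleton) (auto simp: phipc s)
    finally show "Op s (\<lambda>i. if i = 0 then 1 else 0) = s" by simp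
  qed
  define Hs where "Hs = (\<lambda>s. (\<lambda>c. Op s c) ` ({..<n} \<rightarrow>\<^sub>E {..<E}))"
  have Hs_fin: "\<And>s. finite (Hs s)" by (simp add: Hs_def finite_PiE)
  have Hs_card: "\<And>s. card (Hs s) \<le> E ^ n"
  proof -
    fix s
    have "card (Hs s) \<le> card ({..<n} \<rightarrow>\<^sub>E {..<E})" unfolding Hs_def by (rule card_image_le) (simp add: finite_PiE)
    also have "\<dots> = E ^ n" by (simp add: card_PiE)
    finally show "card (Hs s) \<le> E ^ n" .
  qed
  have Op_in: "\<And>s (c::nat\<Rightarrow>nat). s \<in> carrier G \<Longrightarrow> Op s c \<in> Hs s"
  proof -
    fix s and c :: "nat \<Rightarrow> nat" assume s: "s \<in> carrier G"
    define c' where "c' = (\<lambda>i\<in>{..<n}. c i mod E)"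
    have "c' \<in> {..<n} \<rightarrow>\<^sub>E {..<E}" using E0 by (auto simp: c'_def)
    moreover have "Op s c = Op s c'"
      unfolding Op_def c'_def by (intro finprod_cong') (auto simp: phipc s powmod expE)
    ultimately show "Op s c \<in> Hs s" unfolding Hs_def by blast
  qed
  have Tj_in: "\<And>j s. s \<in> carrier G \<Longrightarrow> (T^^j) s \<in> Hs s"
  proof -
    fix j s assume s: "s \<in> carrier G"
    show "(T^^j) s \<in> Hs s"
    proof (induction j)
      case 0
      then show ?case using Op_in[OF s, of "\<lambda>i. if i = 0 then 1 else 0"] Op_s[OF s] by simp
    next
      case (Suc j)
      then obtain c where "(T^^j) s = Op s c" unfolding Hs_def by blast
      then show ?case using Op_T[OF s] Op_in[OF s] by simp
    qed
  qed
  define r where "r = (fact (E ^ n) :: nat)"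
  have cyc: "\<And>s. s \<in> carrier G \<Longrightarrow> (T^^r) s = (T^^(r + r)) s"
  proof -
    fix s assume s: "s \<in> carrier G"
    have "\<forall>j. (T^^j) s \<in> Hs s" using Tj_in[OF s] by blast
    then show "(T^^r) s = (T^^(r + r)) s" unfolding r_def by (rule funpow_cycle[OF Hs_fin Hs_card])
  qed
  have r0: "r > 0" by (simp add: r_def)
  have cover: "\<And>j. \<exists>Fj. finite Fj \<and> Fj \<subseteq> carrier G \<and> (\<forall>a\<in>carrier G. \<exists>f\<in>Fj. \<exists>b\<in>carrier G. a = f \<otimes> (T^^j) b)"
  proof -
    fix j show "\<exists>Fj. finite Fj \<and> Fj \<subseteq> carrier G \<and> (\<forall>a\<in>carrier G. \<exists>f\<in>Fj. \<exists>b\<in>carrier G. a = f \<otimes> (T^^j) b)"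
    proof (induction j)
      case 0
      show ?case by (rule exI[of _ "{\<one>}"]) auto
    next
      case (Suc j)
      then obtain Fj where Fj: "finite Fj" "Fj \<subseteq> carrier G"
        "\<forall>a\<in>carrier G. \<exists>f\<in>Fj. \<exists>b\<in>carrier G. a = f \<otimes> (T^^j) b" by blast
      define F' where "F' = (\<lambda>(f, f'). f \<otimes> (T^^j) f') ` (Fj \<times> F)"
      have "finite F'" using Fj Ffin by (simp add: F'_def)
      moreover have "F' \<subseteq> carrier G" using Fj Fsub by (force simp: F'_def intro: Tpc m_closed)
      moreover have "\<forall>a\<in>carrier G. \<exists>f\<in>F'. \<exists>b\<in>carrier G. a = f \<otimes> (T^^Suc j) b"
      proof
        fix a assume a: "a \<in> carrier G"
        then obtain f b where fb: "f \<in> Fj" "b \<in> carrier G" "a = f \<otimes> (T^^j) b" using Fj by blast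
        then obtain f' c where fc: "f' \<in> F" "c \<in> carrier G" "b = f' \<otimes> T c" using cov unfolding T_def by blast
        have fcar: "f \<in> carrier G" "f' \<in> carrier G" using fb fc Fj Fsub by auto
        have "(T^^j) b = (T^^j) f' \<otimes> (T^^j) (T c)" using fc fcar Tpm Tc by simp
        also have "(T^^j) (T c) = (T^^Suc j) c" by (simp add: funpow_Suc_right del: funpow.simps)
        finally have e1: "(T^^j) b = (T^^j) f' \<otimes> (T^^Suc j) c" .
        have "a = f \<otimes> ((T^^j) f' \<otimes> (T^^Suc j) c)" unfolding fb(3) e1 ..
        then have "a = (f \<otimes> (T^^j) f') \<otimes> (T^^Suc j) c"
          by (simp only: m_assoc[OF fcar(1) Tpc[OF fcar(2)] Tpc[OF fc(2)]])
        moreover have "f \<otimes> (T^^j) f' \<in> F'" using fb fc by (auto simp: F'_def)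
        ultimately show "\<exists>f\<in>F'. \<exists>b\<in>carrier G. a = f \<otimes> (T^^Suc j) b" using fc by blast
      qed
      ultimately show ?case by blast
    qed
  qed
  from cover[of r] obtain Fr where Fr: "finite Fr" "Fr \<subseteq> carrier G" "\<forall>a\<in>carrier G. \<exists>f\<in>Fr. \<exists>b\<in>carrier G. a = f \<otimes> (T^^r) b"
    by (elim exE conjE)
  have fixsub: "{x \<in> carrier G. phi x = x} \<subseteq> (\<lambda>f. f \<otimes> inv ((T^^r) f)) ` Fr"
  proof
    fix x assume "x \<in> {x \<in> carrier G. phi x = x}"
    then have x: "x \<in> carrier G" "phi x = x" by auto
    have Tx: "T x = \<one>" using x by (simp add: T_def)
    obtain r' where r': "r = Suc r'" using r0 gr0_implies_Suc by blast
    have Trx: "(T^^r) x = \<one>" unfolding r' funpow_Suc_right o_def using Tx Tp1 by simp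
    obtain f z where fz: "f \<in> Fr" "z \<in> carrier G" "x = f \<otimes> (T^^r) z" using Fr x by blast
    have fc: "f \<in> carrier G" using fz Fr by auto
    have "\<one> = (T^^r) f \<otimes> (T^^r) ((T^^r) z)" using Trx fz fc Tpm Tpc by simp
    also have "(T^^r) ((T^^r) z) = (T^^(r + r)) z" by (simp add: funpow_add)
    also have "\<dots> = (T^^r) z" using cyc fz by simp
    finally have "\<one> = (T^^r) f \<otimes> (T^^r) z" .
    then have "(T^^r) z \<otimes> (T^^r) f = \<one>" using m_comm[OF Tpc[OF fc] Tpc[OF fz(2)]] by simp
    then have "inv ((T^^r) f) = (T^^r) z" using inv_equality Tpc fc fz by blast
    then have "x = f \<otimes> inv ((T^^r) f)" using fz by simp
    then show "x \<in> (\<lambda>f. f \<otimes> inv ((T^^r) f)) ` Fr" using fz by blast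
  qed
  have "finite {x \<in> carrier G. phi x = x}" using fixsub Fr by (meson finite_surj)
  then have fix1: "\<And>x. x \<in> carrier G \<Longrightarrow> phi x = x \<Longrightarrow> x = \<one>" using fixtriv by blast
  have Tker: "\<And>y. y \<in> carrier G \<Longrightarrow> T y = \<one> \<Longrightarrow> y = \<one>"
  proof -
    fix y assume y: "y \<in> carrier G" "T y = \<one>"
    then have "inv (inv (phi y)) = y" using inv_equality[of y "inv (phi y)"] by (simp add: T_def)
    then have "phi y = y" using y by simp
    then show "y = \<one>" using fix1 y by blast
  qed
  have Tinj: "\<And>a b. a \<in> carrier G \<Longrightarrow> b \<in> carrier G \<Longrightarrow> T a = T b \<Longrightarrow> a = b"
  proof -
    fix a b assume ab: "a \<in> carrier G" "b \<in> carrier G" "T a = T b"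
    have "T (a \<otimes> inv b) = \<one>" using ab by (simp add: Tm Tinv Tc)
    then have "a \<otimes> inv b = \<one>" using Tker ab by simp
    then have "inv (inv b) = a" using inv_equality[of a "inv b"] ab by simp
    then show "a = b" using ab by simp
  qed
  have Tjinj: "\<And>j a b. a \<in> carrier G \<Longrightarrow> b \<in> carrier G \<Longrightarrow> (T^^j) a = (T^^j) b \<Longrightarrow> a = b"
  proof -
    fix j a b assume "a \<in> carrier G" "b \<in> carrier G" "(T^^j) a = (T^^j) b"
    then show "a = b"
    proof (induction j arbitrary: a b)
      case 0 then show ?case by simp
    next
      case (Suc j)
      have "(T^^j) (T a) = (T^^j) (T b)" using Suc.prems by (simp add: funpow_Suc_right del: funpow.simps)
      then have "T a = T b" using Suc.IH Suc.prems Tc by blast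
      then show ?case using Tinj Suc.prems by blast
    qed
  qed
  show ?thesis
  proof
    fix s assume s: "s \<in> carrier G"
    have "(T^^r) ((T^^r) s) = (T^^r) s" using cyc[OF s] by (simp add: funpow_add)
    then have "(T^^r) s = s" using Tjinj Tpc s by blast
    obtain r' where r': "r = Suc r'" using r0 gr0_implies_Suc by blast
    have "s = T ((T^^r') s)" using \<open>(T^^r) s = s\<close> r' by simp
    then show "\<exists>b\<in>carrier G. s = b \<otimes> inv (phi b)" using Tpc s unfolding T_def by blast
  qed
qed

end

lemma len_vadd[simp]: "length (vadd x y) = min (length x) (length y)"
  by (simp add: vadd_def)
lemma len_vsub[simp]: "length (vsub x y) = min (length x) (length y)"
  by (simp add: vsub_def)
lemma nth_vadd[simp]: "l < length x \<Longrightarrow> l < length y \<Longrightarrow> vadd x y ! l = x ! l + y ! l"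
  by (simp add: vadd_def)
lemma nth_vsub[simp]: "l < length x \<Longrightarrow> l < length y \<Longrightarrow> vsub x y ! l = x ! l - y ! l"
  by (simp add: vsub_def)

lemma zvec_iff[simp]: "x \<in> zvec k \<longleftrightarrow> length x = k" by (simp add: zvec_def)

lemma list_eq_nth: "length x = length y \<Longrightarrow> (\<And>l. l < length x \<Longrightarrow> x ! l = y ! l) \<Longrightarrow> x = y"
  by (rule nth_equalityI) auto

lemma vadd_zero_left: "length x = k \<Longrightarrow> vadd (replicate k 0) x = x"
  by (rule list_eq_nth) auto
lemma vadd_zero_right: "length x = k \<Longrightarrow> vadd x (replicate k 0) = x"
  by (rule list_eq_nth) auto
lemma vsub_zero: "length x = k \<Longrightarrow> vsub x (replicate k 0) = x"
  by (rule list_eq_nth) auto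
lemma vadd_assoc: "length x = k \<Longrightarrow> length y = k \<Longrightarrow> length z = k \<Longrightarrow> vadd (vadd x y) z = vadd x (vadd y z)"
  by (rule list_eq_nth) auto
lemma vsub_vsub: "length z = k \<Longrightarrow> length x = k \<Longrightarrow> length y = k \<Longrightarrow> vsub (vsub z x) y = vsub z (vadd x y)"
  by (rule list_eq_nth) auto
lemma vadd_vsub: "length z = k \<Longrightarrow> length x = k \<Longrightarrow> vadd (vsub z x) x = z"
  by (rule list_eq_nth) auto
lemma vsub_vadd: "length z = k \<Longrightarrow> length x = k \<Longrightarrow> vsub (vadd x z) x = z"
  by (rule list_eq_nth) auto
lemma vadd_neg: "length x = k \<Longrightarrow> vadd (map uminus x) x = replicate k 0"
  by (rule list_eq_nth) auto

section \<open>Sigma group\<close>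

definition Sg :: "('a, 'b) monoid_scheme \<Rightarrow> nat \<Rightarrow> (int list \<Rightarrow> 'a) monoid" where
  "Sg G k = \<lparr>carrier = sigma_carrier k G, monoid.mult = (\<lambda>f g z. f z \<otimes>\<^bsub>G\<^esub> g z), one = (\<lambda>_. \<one>\<^bsub>G\<^esub>)\<rparr>"

lemma Sg_simps[simp]: "carrier (Sg G k) = sigma_carrier k G" "f \<otimes>\<^bsub>Sg G k\<^esub> g = (\<lambda>z. f z \<otimes>\<^bsub>G\<^esub> g z)"
  "\<one>\<^bsub>Sg G k\<^esub> = (\<lambda>_. \<one>\<^bsub>G\<^esub>)"
  by (simp_all add: Sg_def)

lemma SC_iff: "f \<in> sigma_carrier k G \<longleftrightarrow> (\<forall>z. f z \<in> carrier G) \<and> (\<forall>z. length z \<noteq> k \<longrightarrow> f z = \<one>\<^bsub>G\<^esub>)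
                          \<and> finite {z. f z \<noteq> \<one>\<^bsub>G\<^esub>}"
  by (simp add: sigma_carrier_def)

context comm_group
begin

lemma SC_mult: "f \<in> sigma_carrier k G \<Longrightarrow> g \<in> sigma_carrier k G \<Longrightarrow> (\<lambda>z. f z \<otimes> g z) \<in> sigma_carrier k G"
proof -
  assume f: "f \<in> sigma_carrier k G" and g: "g \<in> sigma_carrier k G"
  have "{z. f z \<otimes> g z \<noteq> \<one>} \<subseteq> {z. f z \<noteq> \<one>} \<union> {z. g z \<noteq> \<one>}" using f g by (auto simp: SC_iff)
  then show ?thesis using f g by (auto simp: SC_iff intro: finite_subset)
qed

lemma SC_inv: "f \<in> sigma_carrier k G \<Longrightarrow> (\<lambda>z. inv (f z)) \<in> sigma_carrier k G"
proof -
  assume f: "f \<in> sigma_carrier k G"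
  have "{z. inv (f z) \<noteq> \<one>} = {z. f z \<noteq> \<one>}" using f by (auto simp: SC_iff)
  then show ?thesis using f by (auto simp: SC_iff)
qed

lemma SC_one: "(\<lambda>_. \<one>) \<in> sigma_carrier k G" by (simp add: SC_iff)

lemma Sg_comm_group: "comm_group (Sg G k)"
proof (rule comm_groupI)
  show "\<And>x y. x \<in> carrier (Sg G k) \<Longrightarrow> y \<in> carrier (Sg G k) \<Longrightarrow> x \<otimes>\<^bsub>Sg G k\<^esub> y \<in> carrier (Sg G k)"
    by (simp add: SC_mult)
  show "\<one>\<^bsub>Sg G k\<^esub> \<in> carrier (Sg G k)" by (simp add: SC_one)
  show "\<And>x y z. x \<in> carrier (Sg G k) \<Longrightarrow> y \<in> carrier (Sg G k) \<Longrightarrow> z \<in> carrier (Sg G k) \<Longrightarrow>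
     x \<otimes>\<^bsub>Sg G k\<^esub> y \<otimes>\<^bsub>Sg G k\<^esub> z = x \<otimes>\<^bsub>Sg G k\<^esub> (y \<otimes>\<^bsub>Sg G k\<^esub> z)"
    by (auto simp: SC_iff m_assoc)
  show "\<And>x y. x \<in> carrier (Sg G k) \<Longrightarrow> y \<in> carrier (Sg G k) \<Longrightarrow> x \<otimes>\<^bsub>Sg G k\<^esub> y = y \<otimes>\<^bsub>Sg G k\<^esub> x"
    by (auto simp: SC_iff m_comm)
  show "\<And>x. x \<in> carrier (Sg G k) \<Longrightarrow> \<one>\<^bsub>Sg G k\<^esub> \<otimes>\<^bsub>Sg G k\<^esub> x = x"
    by (auto simp: SC_iff)
  show "\<And>x. x \<in> carrier (Sg G k) \<Longrightarrow> \<exists>y\<in>carrier (Sg G k). y \<otimes>\<^bsub>Sg G k\<^esub> x = \<one>\<^bsub>Sg G k\<^esub>"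
  proof -
    fix x assume x: "x \<in> carrier (Sg G k)"
    then have "(\<lambda>z. inv (x z)) \<in> carrier (Sg G k)" by (simp add: SC_inv)
    moreover have "(\<lambda>z. inv (x z)) \<otimes>\<^bsub>Sg G k\<^esub> x = \<one>\<^bsub>Sg G k\<^esub>" using x by (auto simp: SC_iff)
    ultimately show "\<exists>y\<in>carrier (Sg G k). y \<otimes>\<^bsub>Sg G k\<^esub> x = \<one>\<^bsub>Sg G k\<^esub>" by blast
  qed
qed

lemma Sg_inv: "f \<in> sigma_carrier k G \<Longrightarrow> inv\<^bsub>Sg G k\<^esub> f = (\<lambda>z. inv (f z))"
proof -
  assume f: "f \<in> sigma_carrier k G"
  interpret S: comm_group "Sg G k" by (rule Sg_comm_group)
  show ?thesis
    by (rule S.inv_equality) (use f in \<open>auto simp: SC_iff SC_inv\<close>)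
qed

lemma Sg_pow: "f \<in> sigma_carrier k G \<Longrightarrow> f [^]\<^bsub>Sg G k\<^esub> (j::nat) = (\<lambda>z. f z [^] j)"
  by (induction j) auto

lemma shift_SC: assumes f: "f \<in> sigma_carrier k G" and x: "length x = k"
  shows "shift k G x f \<in> sigma_carrier k G"
proof -
  have "{z. shift k G x f z \<noteq> \<one>} \<subseteq> (\<lambda>w. vadd w x) ` {w. f w \<noteq> \<one>}"
  proof
    fix z assume "z \<in> {z. shift k G x f z \<noteq> \<one>}"
    then have z: "length z = k" "f (vsub z x) \<noteq> \<one>" by (auto simp: shift_def split: if_splits)
    then show "z \<in> (\<lambda>w. vadd w x) ` {w. f w \<noteq> \<one>}" using vadd_vsub[OF z(1) x]
      by (metis (mono_tags, lifting) image_eqI mem_Collect_eq)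
  qed
  moreover have "finite ((\<lambda>w. vadd w x) ` {w. f w \<noteq> \<one>})" using f by (simp add: SC_iff)
  ultimately have "finite {z. shift k G x f z \<noteq> \<one>}" by (rule finite_subset)
  moreover have "\<forall>z. shift k G x f z \<in> carrier G" using f by (simp add: SC_iff shift_def)
  moreover have "\<forall>z. length z \<noteq> k \<longrightarrow> shift k G x f z = \<one>" by (simp add: shift_def)
  ultimately show ?thesis by (simp add: SC_iff)
qed

lemma shift_zero: "f \<in> sigma_carrier k G \<Longrightarrow> shift k G (replicate k 0) f = f"
  by (auto simp: shift_def SC_iff vsub_zero)

lemma shift_one: "shift k G x (\<lambda>_. \<one>) = (\<lambda>_. \<one>)"
  by (auto simp: shift_def)

lemma shift_mult: "shift k G x (\<lambda>z. f z \<otimes> g z) = (\<lambda>z. shift k G x f z \<otimes> shift k G x g z)"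
  by (auto simp: shift_def)

lemma shift_shift: "length x = k \<Longrightarrow> length y = k \<Longrightarrow> shift k G x (shift k G y f) = shift k G (vadd x y) f"
  by (auto simp: shift_def vsub_vsub)

lemma W_mult[simp]: "(f,x) \<otimes>\<^bsub>wreath G k\<^esub> (g,y) = (\<lambda>z. f z \<otimes> shift k G x g z, vadd x y)"
  by (simp add: wreath_def)
lemma W_carrier[simp]: "carrier (wreath G k) = sigma_carrier k G \<times> zvec k"
  by (simp add: wreath_def)
lemma W_one[simp]: "\<one>\<^bsub>wreath G k\<^esub> = (\<lambda>_. \<one>, replicate k 0)"
  by (simp add: wreath_def)

lemma W_group: "group (wreath G k)"
proof (rule groupI)
  show "\<And>a b. a \<in> carrier (wreath G k) \<Longrightarrow> b \<in> carrier (wreath G k) \<Longrightarrow> a \<otimes>\<^bsub>wreath G k\<^esub> b \<in> carrier (wreath G k)"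
    by (auto simp: SC_mult shift_SC)
  show "\<one>\<^bsub>wreath G k\<^esub> \<in> carrier (wreath G k)" by (simp add: SC_one)
  show "\<And>a b c. a \<in> carrier (wreath G k) \<Longrightarrow> b \<in> carrier (wreath G k) \<Longrightarrow> c \<in> carrier (wreath G k) \<Longrightarrow>
     a \<otimes>\<^bsub>wreath G k\<^esub> b \<otimes>\<^bsub>wreath G k\<^esub> c = a \<otimes>\<^bsub>wreath G k\<^esub> (b \<otimes>\<^bsub>wreath G k\<^esub> c)"
  proof -
    fix a b c assume abc: "a \<in> carrier (wreath G k)" "b \<in> carrier (wreath G k)" "c \<in> carrier (wreath G k)"
    obtain f x g y h w where e: "a = (f,x)" "b = (g,y)" "c = (h,w)" by (metis prod.exhaust)
    have f: "f \<in> sigma_carrier k G" "g \<in> sigma_carrier k G" "h \<in> sigma_carrier k G"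
      and x: "length x = k" "length y = k" "length w = k" using abc e by auto
    have sg: "shift k G x g \<in> sigma_carrier k G" "shift k G (vadd x y) h \<in> sigma_carrier k G"
      using shift_SC f x by auto
    have "(\<lambda>z. f z \<otimes> shift k G x g z \<otimes> shift k G (vadd x y) h z) =
          (\<lambda>z. f z \<otimes> shift k G x (\<lambda>z. g z \<otimes> shift k G y h z) z)"
      using f sg by (auto simp: shift_mult shift_shift x SC_iff m_assoc)
    then show "a \<otimes>\<^bsub>wreath G k\<^esub> b \<otimes>\<^bsub>wreath G k\<^esub> c = a \<otimes>\<^bsub>wreath G k\<^esub> (b \<otimes>\<^bsub>wreath G k\<^esub> c)"
      using e x by (simp add: vadd_assoc)
  qed
  show "\<And>a. a \<in> carrier (wreath G k) \<Longrightarrow> \<one>\<^bsub>wreath G k\<^esub> \<otimes>\<^bsub>wreath G k\<^esub> a = a"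
    by (auto simp: shift_zero vadd_zero_left SC_iff)
  show "\<And>a. a \<in> carrier (wreath G k) \<Longrightarrow> \<exists>b\<in>carrier (wreath G k). b \<otimes>\<^bsub>wreath G k\<^esub> a = \<one>\<^bsub>wreath G k\<^esub>"
  proof -
    fix a assume a: "a \<in> carrier (wreath G k)"
    obtain f x where e: "a = (f,x)" by (metis prod.exhaust)
    have f: "f \<in> sigma_carrier k G" and x: "length x = k" using a e by auto
    define g where "g = shift k G (map uminus x) f"
    have g: "g \<in> sigma_carrier k G" using shift_SC[OF f] x by (simp add: g_def)
    have "(\<lambda>z. inv (g z), map uminus x) \<otimes>\<^bsub>wreath G k\<^esub> a = \<one>\<^bsub>wreath G k\<^esub>"
      using e g x by (auto simp: g_def vadd_neg SC_iff)
    moreover have "(\<lambda>z. inv (g z), map uminus x) \<in> carrier (wreath G k)" using SC_inv[OF g] x by simp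
    ultimately show "\<exists>b\<in>carrier (wreath G k). b \<otimes>\<^bsub>wreath G k\<^esub> a = \<one>\<^bsub>wreath G k\<^esub>" by blast
  qed
qed

end

locale wsetup = comm_group G for G :: "('a, 'b) monoid_scheme" (structure) +
  fixes k :: nat and phi :: "(int list \<Rightarrow> 'a) \<times> int list \<Rightarrow> (int list \<Rightarrow> 'a) \<times> int list" and n :: nat
  assumes fin: "finite (carrier G)" and k1: "k \<ge> 1"
    and iso: "phi \<in> iso (wreath G k) (wreath G k)" and n0: "n > 0"
    and per: "\<forall>a \<in> carrier (wreath G k). (phi ^^ n) a = a"
begin

abbreviation "W \<equiv> wreath G k"
abbreviation "zk \<equiv> replicate k (0::int)"
abbreviation "SC \<equiv> sigma_carrier k G"

definition phi' where "phi' f = fst (phi (f, zk))"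
definition psi where "psi x = snd (phi (\<lambda>_. \<one>, x))"

lemma phi_hom: "phi \<in> hom W W" using iso by (simp add: iso_def)

sublocale ph: group_hom W W phi
  by (simp add: group_hom_def group_hom_axioms_def phi_hom W_group)

lemma phi_closed: "f \<in> SC \<Longrightarrow> length x = k \<Longrightarrow> fst (phi (f,x)) \<in> SC \<and> length (snd (phi (f,x))) = k"
proof -
  assume "f \<in> SC" "length x = k"
  then have "phi (f,x) \<in> carrier W" using ph.hom_closed by simp
  then show ?thesis by (cases "phi (f,x)") auto
qed

lemma W_pow_base: "f \<in> SC \<Longrightarrow> (f, zk) [^]\<^bsub>W\<^esub> (j::nat) = (\<lambda>z. f z [^] j, zk)"
proof (induction j)
  case 0 then show ?case by simp
next
  case (Suc j) then show ?case by (simp add: shift_zero vadd_zero_left)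
qed

lemma W_pow_snd: "g \<in> SC \<Longrightarrow> length y = k \<Longrightarrow> snd ((g, y) [^]\<^bsub>W\<^esub> (j::nat)) = map (\<lambda>c. int j * c) y"
proof (induction j)
  case 0 then show ?case by (intro list_eq_nth) auto
next
  case (Suc j)
  obtain a b where ab: "(g, y) [^]\<^bsub>W\<^esub> j = (a, b)" by (metis prod.exhaust)
  have "snd ((g, y) [^]\<^bsub>W\<^esub> Suc j) = vadd b y" using ab by simp
  also have "\<dots> = map (\<lambda>c. int (Suc j) * c) y" using Suc ab by (intro list_eq_nth) (auto simp: algebra_simps)
  finally show ?case .
qed

definition E where "E = order G"
lemma E0: "E > 0" using fin by (simp add: E_def order_gt_0_iff_finite)
lemma expG: "x \<in> carrier G \<Longrightarrow> x [^] E = \<one>" by (simp add: E_def pow_order_eq_1)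

lemma phi_base: assumes f: "f \<in> SC" shows "phi (f, zk) = (phi' f, zk)"
proof -
  obtain g y where gy: "phi (f, zk) = (g, y)" by (metis prod.exhaust)
  have gc: "g \<in> SC" "length y = k" using phi_closed[OF f, of zk] gy by auto
  have "(f, zk) [^]\<^bsub>W\<^esub> E = \<one>\<^bsub>W\<^esub>" using W_pow_base[OF f] f by (auto simp: expG SC_iff)
  then have "phi ((f, zk) [^]\<^bsub>W\<^esub> E) = \<one>\<^bsub>W\<^esub>" by (metis ph.hom_one)
  then have "(g, y) [^]\<^bsub>W\<^esub> E = \<one>\<^bsub>W\<^esub>" using f gy ph.hom_nat_pow[of "(f, zk)" E] by simp
  then have mz: "map (\<lambda>c. int E * c) y = zk" using W_pow_snd[OF gc, of E] by simp
  have m: "\<And>l. l < k \<Longrightarrow> int E * y ! l = 0"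
  proof -
    fix l assume l: "l < k"
    have "map (\<lambda>c. int E * c) y ! l = zk ! l" using mz by simp
    then show "int E * y ! l = 0" using l gc by simp
  qed
  have "y = zk"
  proof (rule list_eq_nth)
    show "length y = length zk" using gc by simp
    fix l assume "l < length y"
    then show "y ! l = zk ! l" using m[of l] E0 gc by simp
  qed
  then show ?thesis using gy by (simp add: phi'_def)
qed

lemma phi_mult2: "f \<in> SC \<Longrightarrow> length x = k \<Longrightarrow> g \<in> SC \<Longrightarrow> length y = k \<Longrightarrow>
   phi ((f,x) \<otimes>\<^bsub>W\<^esub> (g,y)) = phi (f,x) \<otimes>\<^bsub>W\<^esub> phi (g,y)"
  by (rule ph.hom_mult) auto

lemma phi'_SC: "f \<in> SC \<Longrightarrow> phi' f \<in> SC"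
  using phi_closed[of f zk] by (simp add: phi'_def)

lemma phi'_mult: assumes f: "f \<in> SC" and g: "g \<in> SC"
  shows "phi' (\<lambda>z. f z \<otimes> g z) = (\<lambda>z. phi' f z \<otimes> phi' g z)"
proof -
  have "(f, zk) \<otimes>\<^bsub>W\<^esub> (g, zk) = (\<lambda>z. f z \<otimes> g z, zk)" using g by (simp add: shift_zero vadd_zero_left)
  then have "phi (\<lambda>z. f z \<otimes> g z, zk) = phi (f, zk) \<otimes>\<^bsub>W\<^esub> phi (g, zk)"
    using phi_mult2[OF f _ g, of zk zk] by simp
  also have "\<dots> = (\<lambda>z. phi' f z \<otimes> phi' g z, zk)"
    using f g by (simp add: phi_base shift_zero phi'_SC vadd_zero_left)
  finally show ?thesis using SC_mult[OF f g] by (simp add: phi_base)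
qed

lemma phi'_hom: "phi' \<in> hom (Sg G k) (Sg G k)"
  by (auto simp: hom_def phi'_SC phi'_mult)

lemma psi_len: "length x = k \<Longrightarrow> length (psi x) = k"
  using phi_closed[of "\<lambda>_. \<one>" x] SC_one by (simp add: psi_def)

lemma W_split: "f \<in> SC \<Longrightarrow> length x = k \<Longrightarrow> (f, x) = (f, zk) \<otimes>\<^bsub>W\<^esub> (\<lambda>_. \<one>, x)"
  by (auto simp: shift_one vadd_zero_left SC_iff)

lemma phi_snd: assumes f: "f \<in> SC" and x: "length x = k" shows "snd (phi (f, x)) = psi x"
proof -
  have "phi (f, x) = phi (f, zk) \<otimes>\<^bsub>W\<^esub> phi (\<lambda>_. \<one>, x)"
    using phi_mult2[OF f _ SC_one x, of zk] W_split[OF f x] by simp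
  also have "\<dots> = (phi' f, zk) \<otimes>\<^bsub>W\<^esub> (fst (phi (\<lambda>_. \<one>, x)), psi x)"
    using f by (simp add: phi_base psi_def)
  finally show ?thesis using psi_len[OF x] by (simp add: vadd_zero_left)
qed

lemma psi_add: assumes x: "length x = k" and y: "length y = k"
  shows "psi (vadd x y) = vadd (psi x) (psi y)"
proof -
  have "(\<lambda>_. \<one>, x) \<otimes>\<^bsub>W\<^esub> (\<lambda>_. \<one>, y) = (\<lambda>_. \<one>, vadd x y)" by (simp add: shift_one)
  then have "phi (\<lambda>_. \<one>, vadd x y) = phi (\<lambda>_. \<one>, x) \<otimes>\<^bsub>W\<^esub> phi (\<lambda>_. \<one>, y)"
    using phi_mult2[OF SC_one x SC_one y] by simp
  then show ?thesis
    by (cases "phi (\<lambda>_. \<one>, x)", cases "phi (\<lambda>_. \<one>, y)") (simp add: psi_def)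
qed

lemma phi'_shift: assumes f: "f \<in> SC" and x: "length x = k"
  shows "phi' (shift k G x f) = shift k G (psi x) (phi' f)"
proof -
  have sf: "shift k G x f \<in> SC" using shift_SC[OF f x] .
  have e1: "(\<lambda>_. \<one>, x) \<otimes>\<^bsub>W\<^esub> (f, zk) = (shift k G x f, x)" using sf x by (auto simp: vadd_zero_right SC_iff)
  have e2: "(shift k G x f, zk) \<otimes>\<^bsub>W\<^esub> (\<lambda>_. \<one>, x) = (shift k G x f, x)" using sf x
    by (auto simp: vadd_zero_left SC_iff shift_one)
  have "phi (\<lambda>_. \<one>, x) \<otimes>\<^bsub>W\<^esub> phi (f, zk) = phi (shift k G x f, zk) \<otimes>\<^bsub>W\<^esub> phi (\<lambda>_. \<one>, x)"
    using phi_mult2[OF SC_one x f, of zk] phi_mult2[OF sf _ SC_one x, of zk] e1 e2 by simp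
  moreover obtain t y where ty: "phi (\<lambda>_. \<one>, x) = (t, y)" by (metis prod.exhaust)
  moreover have tc: "t \<in> SC" "y = psi x" using ty phi_closed[of "\<lambda>_. \<one>" x] SC_one x by (auto simp: psi_def)
  ultimately have "(\<lambda>z. t z \<otimes> shift k G y (phi' f) z) = (\<lambda>z. phi' (shift k G x f) z \<otimes> shift k G zk t z)"
    using f sf by (simp add: phi_base)
  then have eq: "\<And>z. t z \<otimes> shift k G y (phi' f) z = phi' (shift k G x f) z \<otimes> t z"
    using tc by (metis shift_zero)
  have "\<And>z. shift k G y (phi' f) z = phi' (shift k G x f) z"
  proof -
    fix z
    have c: "t z \<in> carrier G" "shift k G y (phi' f) z \<in> carrier G" "phi' (shift k G x f) z \<in> carrier G"
      using tc phi'_SC[OF f] phi'_SC[OF sf] shift_SC[OF phi'_SC[OF f], of y] psi_len[OF x]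
      by (auto simp: SC_iff)
    have "t z \<otimes> shift k G y (phi' f) z = t z \<otimes> phi' (shift k G x f) z" using eq[of z] c by (simp add: m_comm)
    then show "shift k G y (phi' f) z = phi' (shift k G x f) z" using c by simp
  qed
  then show ?thesis using tc by auto
qed

lemma phi_iter: "f \<in> SC \<Longrightarrow> (phi^^j) (f, zk) = ((phi'^^j) f, zk) \<and> (phi'^^j) f \<in> SC"
  by (induction j) (auto simp: phi_base phi'_SC)

lemma phi'_per: "f \<in> SC \<Longrightarrow> (phi'^^n) f = f"
  using phi_iter[of f n] per by auto

lemma phi_iter_snd: "f \<in> SC \<Longrightarrow> length x = k \<Longrightarrow> snd ((phi^^j) (f, x)) = (psi^^j) x \<and> (phi^^j) (f, x) \<in> carrier W"
proof (induction j)
  case 0 then show ?case by simp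
next
  case (Suc j)
  obtain g y where gy: "(phi^^j) (f, x) = (g, y)" by (metis prod.exhaust)
  have gc: "g \<in> SC" "length y = k" "y = (psi^^j) x" using Suc gy by auto
  have "phi (g, y) \<in> carrier W" using gc ph.hom_closed[of "(g,y)"] by simp
  then show ?case using gy gc phi_snd[OF gc(1,2)] by simp
qed

lemma psi_per: "length x = k \<Longrightarrow> (psi^^n) x = x"
  using phi_iter_snd[of "\<lambda>_. \<one>" x n] per SC_one by auto

lemma psi_iter_len: "length x = k \<Longrightarrow> length ((psi^^j) x) = k"
  by (induction j) (auto simp: psi_len)

definition smul :: "int \<Rightarrow> int list \<Rightarrow> int list" where "smul c v = map (\<lambda>a. c * a) v"

lemma len_smul[simp]: "length (smul c v) = length v" by (simp add: smul_def)
lemma nth_smul[simp]: "l < length v \<Longrightarrow> smul c v ! l = c * v ! l" by (simp add: smul_def)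

lemma psi_zero: "psi zk = zk"
proof -
  have l: "length (psi zk) = k" using psi_len by simp
  have "psi zk = vadd (psi zk) (psi zk)" using psi_add[of zk zk] by (simp add: vadd_zero_left)
  then have "\<And>l. l < k \<Longrightarrow> psi zk ! l = psi zk ! l + psi zk ! l" using l by (metis nth_vadd)
  then show ?thesis using l by (intro list_eq_nth) auto
qed

lemma psi_smul: "length v = k \<Longrightarrow> psi (smul (int m) v) = smul (int m) (psi v)"
proof (induction m)
  case 0
  have "smul (int 0) v = zk" using 0 by (intro list_eq_nth) auto
  moreover have "smul (int 0) (psi v) = zk" using 0 psi_len by (intro list_eq_nth) auto
  ultimately show ?case using psi_zero by simp
next
  case (Suc m)
  have e: "smul (int (Suc m)) v = vadd (smul (int m) v) v" using Suc by (intro list_eq_nth) (auto simp: algebra_simps)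
  have e2: "smul (int (Suc m)) (psi v) = vadd (smul (int m) (psi v)) (psi v)"
    using Suc psi_len by (intro list_eq_nth) (auto simp: algebra_simps)
  show ?case unfolding e e2 using Suc psi_add[of "smul (int m) v" v] by simp
qed

lemma psi_iter_smul: "length v = k \<Longrightarrow> (psi^^j) (smul (int m) v) = smul (int m) ((psi^^j) v)"
  by (induction j) (auto simp: psi_smul psi_iter_len)

lemma psi_inj: "length a = k \<Longrightarrow> length b = k \<Longrightarrow> psi a = psi b \<Longrightarrow> a = b"
proof -
  assume ab: "length a = k" "length b = k" "psi a = psi b"
  obtain m where m: "n = Suc m" using n0 gr0_implies_Suc by blast
  have "(psi^^n) a = (psi^^n) b" using ab(3) unfolding m funpow_Suc_right o_def by simp
  then show "a = b" using psi_per ab by simp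
qed

definition orb where "orb x = (\<lambda>j. (psi^^j) x) ` {..<n}"

lemma orb_fin: "finite (orb x)" by (simp add: orb_def)
lemma orb_len: "length x = k \<Longrightarrow> y \<in> orb x \<Longrightarrow> length y = k" by (auto simp: orb_def psi_iter_len)
lemma orb_self: "x \<in> orb x" using n0 unfolding orb_def by (metis funpow_0 image_eqI lessThan_iff)

lemma orb_psi: assumes x: "length x = k" shows "psi ` orb x = orb x"
proof
  show "psi ` orb x \<subseteq> orb x"
  proof
    fix y assume "y \<in> psi ` orb x"
    then obtain j where j: "j < n" "y = psi ((psi^^j) x)" by (auto simp: orb_def)
    show "y \<in> orb x"
    proof (cases "Suc j < n")
      case True then show ?thesis using j unfolding orb_def by (metis funpow.simps(2) image_eqI lessThan_iff o_apply)
    next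
      case False
      then have "Suc j = n" using j by simp
      then have "y = x" using j psi_per[OF x] by (metis funpow.simps(2) o_apply)
      then show ?thesis using orb_self by simp
    qed
  qed
  show "orb x \<subseteq> psi ` orb x"
  proof
    fix y assume "y \<in> orb x"
    then obtain j where j: "j < n" "y = (psi^^j) x" by (auto simp: orb_def)
    show "y \<in> psi ` orb x"
    proof (cases j)
      case 0
      obtain m where m: "n = Suc m" using n0 gr0_implies_Suc by blast
      have "y = psi ((psi^^m) x)" using j 0 psi_per[OF x] m by simp
      moreover have "(psi^^m) x \<in> orb x" using m unfolding orb_def by simp
      ultimately show ?thesis by blast
    next
      case (Suc m)
      have "y = psi ((psi^^m) x)" using j Suc by simp
      moreover have "(psi^^m) x \<in> orb x" using Suc j unfolding orb_def by simp
      ultimately show ?thesis by blast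
    qed
  qed
qed

lemma Sg_finprod_eval:
  assumes "finite A" "\<And>y. y \<in> A \<Longrightarrow> h y \<in> SC"
  shows "finprod (Sg G k) h A z = finprod G (\<lambda>y. h y z) A"
  using assms
proof (induction A rule: finite_induct)
  case empty
  interpret S: comm_group "Sg G k" by (rule Sg_comm_group)
  show ?case by simp
next
  case (insert a A)
  interpret S: comm_group "Sg G k" by (rule Sg_comm_group)
  have hA: "h \<in> A \<rightarrow> carrier (Sg G k)" "h a \<in> carrier (Sg G k)" using insert by auto
  have "finprod (Sg G k) h (insert a A) = h a \<otimes>\<^bsub>Sg G k\<^esub> finprod (Sg G k) h A"
    using insert hA by (intro S.finprod_insert) auto
  then have "finprod (Sg G k) h (insert a A) z = h a z \<otimes> finprod (Sg G k) h A z" by simp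
  also have "\<dots> = h a z \<otimes> finprod G (\<lambda>y. h y z) A" using insert by simp
  also have "\<dots> = finprod G (\<lambda>y. h y z) (insert a A)"
    using insert hA by (subst finprod_insert) (auto simp: SC_iff Pi_def)
  finally show ?case .
qed

lemma orbit_prod_fixed:
  assumes s: "s \<in> SC" "phi' s = s" and x: "length x = k"
  shows "finprod (Sg G k) (\<lambda>y. shift k G y s) (orb x) \<in> SC \<and>
         phi' (finprod (Sg G k) (\<lambda>y. shift k G y s) (orb x)) = finprod (Sg G k) (\<lambda>y. shift k G y s) (orb x)"
proof -
  interpret S: comm_group "Sg G k" by (rule Sg_comm_group)
  have hc: "(\<lambda>y. shift k G y s) \<in> orb x \<rightarrow> carrier (Sg G k)" using shift_SC[OF s(1)] orb_len[OF x] by auto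
  have "phi' (finprod (Sg G k) (\<lambda>y. shift k G y s) (orb x)) = finprod (Sg G k) (\<lambda>y. phi' (shift k G y s)) (orb x)"
    by (rule S.hom_finprod_self[OF phi'_hom hc])
  also have "\<dots> = finprod (Sg G k) (\<lambda>y. shift k G (psi y) s) (orb x)"
    using hc orb_len[OF x] by (intro S.finprod_cong') (auto simp: phi'_shift s Pi_def psi_len shift_SC)
  also have "\<dots> = finprod (Sg G k) (\<lambda>y. shift k G y s) (psi ` orb x)"
  proof (rule S.finprod_reindex[symmetric])
    show "(\<lambda>y. shift k G y s) \<in> psi ` orb x \<rightarrow> carrier (Sg G k)" using hc orb_psi[OF x] by simp
    show "inj_on psi (orb x)" using orb_len[OF x] psi_inj by (meson inj_onI)
  qed
  also have "\<dots> = finprod (Sg G k) (\<lambda>y. shift k G y s) (orb x)" using orb_psi[OF x] by simp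
  finally show ?thesis using hc by (simp add: S.finprod_closed[OF hc, simplified])
qed

lemma abs_mult_ge: "(d::int) \<noteq> 0 \<Longrightarrow> c \<ge> 0 \<Longrightarrow> \<bar>c * d\<bar> \<ge> c"
proof -
  assume d: "d \<noteq> 0" and c: "c \<ge> 0"
  have "\<bar>d\<bar> \<ge> 1" using d by simp
  then have "c * 1 \<le> c * \<bar>d\<bar>" using c by (intro mult_left_mono) auto
  then show ?thesis using c by (simp add: abs_mult)
qed

lemma fix_infinite:
  assumes s: "s \<in> SC" "phi' s = s" and sn: "s \<noteq> (\<lambda>_. \<one>)"
  shows "infinite {f \<in> SC. phi' f = f}"
proof
  assume finFx: "finite {f \<in> SC. phi' f = f}"
  define Fx where "Fx = {f \<in> SC. phi' f = f}"
  obtain z0 where z0: "s z0 \<noteq> \<one>" using sn by auto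
  have z0k: "length z0 = k" using z0 s by (auto simp: SC_iff)
  define S0 where "S0 = {z. s z \<noteq> \<one>}"
  have S0fin: "finite S0" using s by (simp add: SC_iff S0_def)
  have S0len: "\<And>a. a \<in> S0 \<Longrightarrow> length a = k" using s by (auto simp: SC_iff S0_def)
  define B0 where "B0 = (\<Sum>a\<in>S0. \<Sum>l<k. nat \<bar>a ! l\<bar>)"
  have bnd: "\<And>a l. a \<in> S0 \<Longrightarrow> l < k \<Longrightarrow> \<bar>a ! l\<bar> \<le> int B0"
  proof -
    fix a l assume al: "a \<in> S0" "l < k"
    have "nat \<bar>a ! l\<bar> \<le> (\<Sum>l<k. nat \<bar>a ! l\<bar>)" using al by (intro member_le_sum) auto
    also have "\<dots> \<le> B0" unfolding B0_def using al S0fin by (intro member_le_sum) auto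
    finally show "\<bar>a ! l\<bar> \<le> int B0" by linarith
  qed
  define B where "B = 2 * B0 + 1"
  define e1 where "e1 = (1::int) # replicate (k - 1) 0"
  have e1k: "length e1 = k" using k1 by (simp add: e1_def)
  have e10: "e1 ! 0 = 1" by (simp add: e1_def)
  define Z where "Z = (\<Union>f\<in>Fx. {z. f z \<noteq> \<one>})"
  have Zfin: "finite Z" using finFx unfolding Z_def Fx_def by (auto simp: SC_iff)
  define M where "M = (\<Sum>z\<in>Z. nat \<bar>z ! 0\<bar>)"
  have Mb: "\<And>z. z \<in> Z \<Longrightarrow> \<bar>z ! 0\<bar> \<le> int M"
  proof -
    fix z assume "z \<in> Z"
    then have "nat \<bar>z ! 0\<bar> \<le> M" unfolding M_def using Zfin by (intro member_le_sum) auto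
    then show "\<bar>z ! 0\<bar> \<le> int M" by linarith
  qed
  define t where "t = M + 1"
  define c where "c = int (t * B)"
  define x where "x = smul c e1"
  have xk: "length x = k" using e1k by (simp add: x_def)
  have cB: "c \<ge> int B" "c \<ge> int t" unfolding c_def t_def B_def by simp_all
  define u where "u = finprod (Sg G k) (\<lambda>y. shift k G y s) (orb x)"
  have uF: "u \<in> Fx" using orbit_prod_fixed[OF s xk] by (simp add: u_def Fx_def)
  define w where "w = vadd x z0"
  have wk: "length w = k" using xk z0k by (simp add: w_def)
  have other: "\<And>y. y \<in> orb x \<Longrightarrow> y \<noteq> x \<Longrightarrow> s (vsub w y) = \<one>"
  proof (rule ccontr)
    fix y assume y: "y \<in> orb x" "y \<noteq> x" "s (vsub w y) \<noteq> \<one>"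
    obtain j where j: "y = (psi^^j) x" using y unfolding orb_def by auto
    have yj: "y = smul c ((psi^^j) e1)" unfolding j x_def c_def using psi_iter_smul[OF e1k, of j "t * B"] by simp
    have pk: "length ((psi^^j) e1) = k" using psi_iter_len[OF e1k] .
    have "(psi^^j) e1 \<noteq> e1" using y(2) yj x_def by auto
    then obtain l where l: "l < k" "(psi^^j) e1 ! l \<noteq> e1 ! l" using pk e1k list_eq_nth by metis
    have yk: "length y = k" using yj pk by simp
    have aS: "vsub w y \<in> S0" using y(3) by (simp add: S0_def)
    have "\<bar>vsub w y ! l\<bar> \<le> int B0" using bnd[OF aS l(1)] .
    moreover have "\<bar>z0 ! l\<bar> \<le> int B0" using bnd[of z0 l] z0 l(1) by (simp add: S0_def)
    moreover have "vsub w y ! l = x ! l + z0 ! l - y ! l" using l wk yk xk z0k by (simp add: w_def)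
    moreover have "y ! l - x ! l = c * ((psi^^j) e1 ! l - e1 ! l)" using yj l pk e1k by (simp add: x_def algebra_simps)
    moreover have "\<bar>c * ((psi^^j) e1 ! l - e1 ! l)\<bar> \<ge> c" using l cB by (intro abs_mult_ge) auto
    ultimately show False using cB unfolding B_def by linarith
  qed
  have "u w = finprod G (\<lambda>y. shift k G y s w) (orb x)"
    unfolding u_def using orb_fin orb_len[OF xk] shift_SC[OF s(1)] by (intro Sg_finprod_eval) auto
  also have "\<dots> = finprod G (\<lambda>y. if y = x then s z0 else \<one>) (orb x)"
  proof (intro finprod_cong')
    show "(\<lambda>y. if y = x then s z0 else \<one>) \<in> orb x \<rightarrow> carrier G" using s by (auto simp: SC_iff)
    fix y assume y: "y \<in> orb x"
    show "shift k G y s w = (if y = x then s z0 else \<one>)"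
    proof (cases "y = x")
      case True then show ?thesis using wk xk z0k by (simp add: shift_def w_def vsub_vadd)
    next
      case False then show ?thesis using other[OF y] wk by (simp add: shift_def)
    qed
  qed simp
  also have "\<dots> = s z0" using orb_self orb_fin s by (intro finprod_singleton_swap) (auto simp: SC_iff)
  finally have "u w \<noteq> \<one>" using z0 by simp
  then have "w \<in> Z" using uF unfolding Z_def by blast
  then have "\<bar>w ! 0\<bar> \<le> int M" by (rule Mb)
  moreover have "w ! 0 = c + z0 ! 0" using k1 wk xk z0k e10 e1k by (simp add: w_def x_def)
  moreover have "\<bar>z0 ! 0\<bar> \<le> int B0" using bnd[of z0 0] z0 k1 by (simp add: S0_def)
  moreover have "c \<ge> int t * (2 * int B0 + 1)" unfolding c_def B_def by (simp add: algebra_simps)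
  moreover have "int t = int M + 1" by (simp add: t_def)
  moreover have "int t * int B0 \<ge> int B0" using mult_right_mono[of 1 "int t" "int B0"] by (simp add: t_def)
  moreover have "int t * (2 * int B0 + 1) = 2 * (int t * int B0) + int t" by (simp add: algebra_simps)
  ultimately show False by linarith
qed

lemma fix_triv: "finite {f \<in> SC. phi' f = f} \<Longrightarrow> \<forall>f\<in>SC. phi' f = f \<longrightarrow> f = (\<lambda>_. \<one>)"
  using fix_infinite by blast

end

lemma twisted_equiv:
  assumes HG: "group H" and hom: "psi \<in> hom H H"
  shows "equiv (carrier H) (twisted_conj H psi)"
proof -
  interpret H: group H by (rule HG)
  interpret ps: group_hom H H psi by (simp add: group_hom_def group_hom_axioms_def HG hom)
  have lc: "\<And>a b. a \<in> carrier H \<Longrightarrow> b \<in> carrier H \<Longrightarrow> inv\<^bsub>H\<^esub> a \<otimes>\<^bsub>H\<^esub> (a \<otimes>\<^bsub>H\<^esub> b) = b"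
    by (simp add: H.m_assoc[symmetric])
  have tcI: "\<And>a b g. a \<in> carrier H \<Longrightarrow> b \<in> carrier H \<Longrightarrow> g \<in> carrier H \<Longrightarrow>
      b = g \<otimes>\<^bsub>H\<^esub> a \<otimes>\<^bsub>H\<^esub> inv\<^bsub>H\<^esub> (psi g) \<Longrightarrow> (a, b) \<in> twisted_conj H psi"
    unfolding twisted_conj_def by blast
  show ?thesis
  proof (rule equivI)
    show "twisted_conj H psi \<subseteq> carrier H \<times> carrier H" by (auto simp: twisted_conj_def)
    show "refl_on (carrier H) (twisted_conj H psi)"
    proof (unfold refl_on_def, intro ballI)
      fix x assume x: "x \<in> carrier H"
      have "x = \<one>\<^bsub>H\<^esub> \<otimes>\<^bsub>H\<^esub> x \<otimes>\<^bsub>H\<^esub> inv\<^bsub>H\<^esub> (psi \<one>\<^bsub>H\<^esub>)" using x by simp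
      then show "(x, x) \<in> twisted_conj H psi" using x by (intro tcI[of x x "\<one>\<^bsub>H\<^esub>"]) auto
    qed
    show "sym (twisted_conj H psi)"
    proof (rule symI)
      fix x y assume "(x, y) \<in> twisted_conj H psi"
      then obtain g where g: "x \<in> carrier H" "y \<in> carrier H" "g \<in> carrier H"
        "y = g \<otimes>\<^bsub>H\<^esub> x \<otimes>\<^bsub>H\<^esub> inv\<^bsub>H\<^esub> (psi g)" by (auto simp: twisted_conj_def)
      have e: "x = inv\<^bsub>H\<^esub> g \<otimes>\<^bsub>H\<^esub> y \<otimes>\<^bsub>H\<^esub> inv\<^bsub>H\<^esub> (psi (inv\<^bsub>H\<^esub> g))"
        using g by (simp add: H.m_assoc lc)
      have "inv\<^bsub>H\<^esub> g \<in> carrier H" using g by simp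
      then show "(y, x) \<in> twisted_conj H psi" using tcI[OF g(2) g(1) _ e] by blast
    qed
    show "trans (twisted_conj H psi)"
    proof (rule transI)
      fix x y z assume "(x, y) \<in> twisted_conj H psi" "(y, z) \<in> twisted_conj H psi"
      then obtain g h where g: "x \<in> carrier H" "y \<in> carrier H" "g \<in> carrier H"
        "y = g \<otimes>\<^bsub>H\<^esub> x \<otimes>\<^bsub>H\<^esub> inv\<^bsub>H\<^esub> (psi g)"
        and h: "z \<in> carrier H" "h \<in> carrier H" "z = h \<otimes>\<^bsub>H\<^esub> y \<otimes>\<^bsub>H\<^esub> inv\<^bsub>H\<^esub> (psi h)"
        by (auto simp: twisted_conj_def)
      have e: "z = (h \<otimes>\<^bsub>H\<^esub> g) \<otimes>\<^bsub>H\<^esub> x \<otimes>\<^bsub>H\<^esub> inv\<^bsub>H\<^esub> (psi (h \<otimes>\<^bsub>H\<^esub> g))"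
        using g h by (simp add: H.m_assoc H.inv_mult_group)
      have "h \<otimes>\<^bsub>H\<^esub> g \<in> carrier H" using g h by simp
      then show "(x, z) \<in> twisted_conj H psi" using tcI[OF g(1) h(1) _ e] by blast
    qed
  qed
qed

context wsetup
begin

abbreviation "H \<equiv> wreath_base G k"

lemma H_carrier[simp]: "carrier H = SC \<times> {zk}" by (simp add: wreath_base_def wreath_def)
lemma H_eq: "H = W\<lparr>carrier := SC \<times> {zk}\<rparr>" by (simp add: wreath_base_def)
lemma H_mult[simp]: "a \<otimes>\<^bsub>H\<^esub> b = a \<otimes>\<^bsub>W\<^esub> b" by (simp add: wreath_base_def)
lemma H_one[simp]: "\<one>\<^bsub>H\<^esub> = \<one>\<^bsub>W\<^esub>" by (simp add: wreath_base_def)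

lemma W_inv_base: "f \<in> SC \<Longrightarrow> inv\<^bsub>W\<^esub> (f, zk) = (\<lambda>z. inv (f z), zk)"
proof -
  assume f: "f \<in> SC"
  show ?thesis
    by (rule group.inv_equality[OF W_group]) (use f SC_inv[OF f] in \<open>auto simp: shift_zero vadd_zero_left SC_iff\<close>)
qed

lemma H_subgroup: "subgroup (SC \<times> {zk}) W"
proof -
  show ?thesis
  proof (rule group.subgroupI[OF W_group])
    show "SC \<times> {zk} \<subseteq> carrier W" by auto
    show "SC \<times> {zk} \<noteq> {}" using SC_one by auto
    show "\<And>a. a \<in> SC \<times> {zk} \<Longrightarrow> inv\<^bsub>W\<^esub> a \<in> SC \<times> {zk}" using W_inv_base SC_inv by auto
    show "\<And>a b. a \<in> SC \<times> {zk} \<Longrightarrow> b \<in> SC \<times> {zk} \<Longrightarrow> a \<otimes>\<^bsub>W\<^esub> b \<in> SC \<times> {zk}"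
      by (auto simp: shift_zero vadd_zero_left SC_mult)
  qed
qed

lemma H_group: "group H"
  unfolding H_eq using subgroup.subgroup_is_group[OF H_subgroup W_group] .

lemma H_inv: "f \<in> SC \<Longrightarrow> inv\<^bsub>H\<^esub> (f, zk) = (\<lambda>z. inv (f z), zk)"
proof -
  assume f: "f \<in> SC"
  have "inv\<^bsub>H\<^esub> (f, zk) = inv\<^bsub>W\<^esub> (f, zk)" unfolding H_eq
    using group.m_inv_consistent[OF W_group H_subgroup] f by simp
  then show ?thesis using W_inv_base[OF f] by simp
qed

lemma phi_hom_H: "phi \<in> hom H H"
proof -
  have "phi \<in> carrier H \<rightarrow> carrier H" by (auto simp: phi_base phi'_SC)
  moreover have "\<forall>x\<in>carrier H. \<forall>y\<in>carrier H. phi (x \<otimes>\<^bsub>H\<^esub> y) = phi x \<otimes>\<^bsub>H\<^esub> phi y"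
  proof (intro ballI)
    fix x y assume "x \<in> carrier H" "y \<in> carrier H"
    then have "x \<in> carrier W" "y \<in> carrier W" by auto
    then show "phi (x \<otimes>\<^bsub>H\<^esub> y) = phi x \<otimes>\<^bsub>H\<^esub> phi y" unfolding H_mult by (rule ph.hom_mult)
  qed
  ultimately show ?thesis by (simp add: hom_def)
qed

lemma rel_iff: assumes f: "f \<in> SC" and h: "h \<in> SC"
  shows "((f, zk), (h, zk)) \<in> twisted_conj H phi \<longleftrightarrow> (\<exists>b\<in>SC. h = (\<lambda>z. (b z \<otimes> f z) \<otimes> inv (phi' b z)))"
proof -
  have key: "\<And>b. b \<in> SC \<Longrightarrow> (b, zk) \<otimes>\<^bsub>H\<^esub> (f, zk) \<otimes>\<^bsub>H\<^esub> inv\<^bsub>H\<^esub> (phi (b, zk)) = (\<lambda>z. (b z \<otimes> f z) \<otimes> inv (phi' b z), zk)"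
  proof -
    fix b assume b: "b \<in> SC"
    have "(b, zk) \<otimes>\<^bsub>H\<^esub> (f, zk) = (\<lambda>z. b z \<otimes> f z, zk)" using f by (simp add: shift_zero vadd_zero_left)
    moreover have "inv\<^bsub>H\<^esub> (phi (b, zk)) = (\<lambda>z. inv (phi' b z), zk)" using b by (simp add: phi_base H_inv phi'_SC)
    ultimately show "(b, zk) \<otimes>\<^bsub>H\<^esub> (f, zk) \<otimes>\<^bsub>H\<^esub> inv\<^bsub>H\<^esub> (phi (b, zk)) = (\<lambda>z. (b z \<otimes> f z) \<otimes> inv (phi' b z), zk)"
      using SC_inv[OF phi'_SC[OF b]] by (simp add: shift_zero vadd_zero_left)
  qed
  show ?thesis
  proof
    assume "((f, zk), (h, zk)) \<in> twisted_conj H phi"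
    then obtain g where g: "g \<in> SC \<times> {zk}" "(h, zk) = g \<otimes>\<^bsub>H\<^esub> (f, zk) \<otimes>\<^bsub>H\<^esub> inv\<^bsub>H\<^esub> (phi g)"
      unfolding twisted_conj_def by auto
    obtain b where b: "g = (b, zk)" "b \<in> SC" using g(1) by auto
    then show "\<exists>b\<in>SC. h = (\<lambda>z. (b z \<otimes> f z) \<otimes> inv (phi' b z))" using g(2) key[OF b(2)] by auto
  next
    assume "\<exists>b\<in>SC. h = (\<lambda>z. (b z \<otimes> f z) \<otimes> inv (phi' b z))"
    then obtain b where b: "b \<in> SC" "h = (\<lambda>z. (b z \<otimes> f z) \<otimes> inv (phi' b z))" by blast
    then have hh: "(h, zk) = (b, zk) \<otimes>\<^bsub>H\<^esub> (f, zk) \<otimes>\<^bsub>H\<^esub> inv\<^bsub>H\<^esub> (phi (b, zk))" using key by simp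
    have c: "(b, zk) \<in> carrier H" "(f, zk) \<in> carrier H" "(h, zk) \<in> carrier H" using b f h by auto
    show "((f, zk), (h, zk)) \<in> twisted_conj H phi" unfolding twisted_conj_def
      using hh c by (intro CollectI case_prodI conjI bexI[of _ "(b, zk)"]) (simp_all only:)
  qed
qed

end

lemma (in comm_group) cancel4:
  assumes "u \<in> carrier G" "v \<in> carrier G" "w \<in> carrier G"
  shows "((v \<otimes> u) \<otimes> inv w) \<otimes> (inv v \<otimes> w) = u"
proof -
  have i: "inv w \<otimes> (inv v \<otimes> w) = inv v" using assms by (simp add: m_lcomm[of "inv w" "inv v" w])
  have "((v \<otimes> u) \<otimes> inv w) \<otimes> (inv v \<otimes> w) = (v \<otimes> u) \<otimes> (inv w \<otimes> (inv v \<otimes> w))"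
    using assms by (simp add: m_assoc)
  also have "\<dots> = (u \<otimes> v) \<otimes> inv v" using i assms by (simp add: m_comm[of v u])
  also have "\<dots> = u" using assms by (simp add: m_assoc)
  finally show ?thesis .
qed

context wsetup
begin

lemma final: "reidemeister_number H phi = 1 \<or> reidemeister_number H phi = \<infinity>"
proof (cases "finite (carrier H // twisted_conj H phi)")
  case False
  then show ?thesis by (simp add: reidemeister_number_def)
next
  case True
  define r where "r = twisted_conj H phi"
  define Qt where "Qt = carrier H // r"
  have eqv: "equiv (carrier H) r" unfolding r_def by (rule twisted_equiv[OF H_group phi_hom_H])
  have Qfin: "finite Qt" using True by (simp add: Qt_def r_def)
  define rep :: "((int list \<Rightarrow> 'a) \<times> int list) set \<Rightarrow> (int list \<Rightarrow> 'a) \<times> int list" where "rep = (\<lambda>Y. (SOME p. p \<in> Y))"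
  have rep_in: "\<And>Xc. Xc \<in> Qt \<Longrightarrow> rep Xc \<in> Xc"
  proof -
    fix Xc assume "Xc \<in> Qt"
    then obtain x where x: "Xc = r``{x}" "x \<in> carrier H" unfolding Qt_def by (auto elim: quotientE)
    then have "x \<in> Xc" using equiv_class_self[OF eqv] by simp
    then show "rep Xc \<in> Xc" unfolding rep_def by (rule someI)
  qed
  have rsub: "r \<subseteq> carrier H \<times> carrier H" using eqv by (simp add: equiv_def)
  define F where "F = (\<lambda>Xc. fst (rep Xc)) ` Qt"
  have Ffin: "finite F" using Qfin by (simp add: F_def)
  interpret S: comm_group "Sg G k" by (rule Sg_comm_group)
  interpret phS: group_hom "Sg G k" "Sg G k" phi'
    by (simp add: group_hom_def group_hom_axioms_def phi'_hom S.is_group)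
  have Fsub: "F \<subseteq> carrier (Sg G k)"
  proof
    fix f assume "f \<in> F"
    then obtain Xc where Xc: "Xc \<in> Qt" "f = fst (rep Xc)" by (auto simp: F_def)
    obtain x where x: "Xc = r``{x}" "x \<in> carrier H" using Xc(1) unfolding Qt_def by (auto elim: quotientE)
    have "rep Xc \<in> carrier H" using rep_in[OF Xc(1)] x rsub by auto
    then show "f \<in> carrier (Sg G k)" using Xc by auto
  qed
  have cov: "\<And>a. a \<in> carrier (Sg G k) \<Longrightarrow> \<exists>f\<in>F. \<exists>b\<in>carrier (Sg G k). a = f \<otimes>\<^bsub>Sg G k\<^esub> (b \<otimes>\<^bsub>Sg G k\<^esub> inv\<^bsub>Sg G k\<^esub> (phi' b))"
  proof -
    fix a assume a: "a \<in> carrier (Sg G k)"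
    define Xc where "Xc = r``{(a, zk)}"
    have XQ: "Xc \<in> Qt" using a unfolding Xc_def Qt_def by (intro quotientI) simp
    have pX: "((a, zk), rep Xc) \<in> r" using rep_in[OF XQ] unfolding Xc_def by simp
    then have "rep Xc \<in> carrier H" using rsub by auto
    then obtain f where f: "rep Xc = (f, zk)" "f \<in> SC" by auto
    have fF: "f \<in> F" using XQ f unfolding F_def by (metis fst_conv image_eqI)
    obtain b where b: "b \<in> SC" "f = (\<lambda>z. (b z \<otimes> a z) \<otimes> inv (phi' b z))"
      using pX f rel_iff[of a f] a unfolding r_def by auto
    define b' where "b' = (\<lambda>z. inv (b z))"
    have b'c: "b' \<in> SC" using SC_inv[OF b(1)] by (simp add: b'_def)
    have "phi' b' = inv\<^bsub>Sg G k\<^esub> (phi' b)" unfolding b'_def using phS.hom_inv[of b] b Sg_inv by simp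
    then have pb': "phi' b' = (\<lambda>z. inv (phi' b z))" using Sg_inv[OF phi'_SC[OF b(1)]] by simp
    have "inv\<^bsub>Sg G k\<^esub> (phi' b') = (\<lambda>z. phi' b z)" using Sg_inv[OF phi'_SC[OF b'c]] pb' phi'_SC[OF b(1)]
      by (simp add: SC_iff)
    then have "f \<otimes>\<^bsub>Sg G k\<^esub> (b' \<otimes>\<^bsub>Sg G k\<^esub> inv\<^bsub>Sg G k\<^esub> (phi' b')) =
        (\<lambda>z. ((b z \<otimes> a z) \<otimes> inv (phi' b z)) \<otimes> (inv (b z) \<otimes> phi' b z))"
      using b by (simp add: b'_def)
    also have "\<dots> = a" using a b(1) phi'_SC[OF b(1)] by (auto simp: SC_iff cancel4)
    finally show "\<exists>f\<in>F. \<exists>b\<in>carrier (Sg G k). a = f \<otimes>\<^bsub>Sg G k\<^esub> (b \<otimes>\<^bsub>Sg G k\<^esub> inv\<^bsub>Sg G k\<^esub> (phi' b))"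
      using fF b'c by force
  qed
  have expS: "\<And>x. x \<in> carrier (Sg G k) \<Longrightarrow> x [^]\<^bsub>Sg G k\<^esub> E = \<one>\<^bsub>Sg G k\<^esub>"
    by (auto simp: Sg_pow SC_iff expG)
  have fixS: "finite {x \<in> carrier (Sg G k). phi' x = x} \<Longrightarrow> \<forall>x\<in>carrier (Sg G k). phi' x = x \<longrightarrow> x = \<one>\<^bsub>Sg G k\<^esub>"
    using fix_triv by simp
  have all: "\<forall>a\<in>carrier (Sg G k). \<exists>b\<in>carrier (Sg G k). a = b \<otimes>\<^bsub>Sg G k\<^esub> inv\<^bsub>Sg G k\<^esub> (phi' b)"
    by (rule S.fitting_main[OF phi'_hom n0 _ E0 expS Ffin Fsub cov fixS]) (simp add: phi'_per)
  have onerel: "\<And>p. p \<in> carrier H \<Longrightarrow> ((\<lambda>_. \<one>, zk), p) \<in> r"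
  proof -
    fix p assume p: "p \<in> carrier H"
    then obtain a where a: "p = (a, zk)" "a \<in> SC" by auto
    then obtain b where b: "b \<in> SC" "a = b \<otimes>\<^bsub>Sg G k\<^esub> inv\<^bsub>Sg G k\<^esub> (phi' b)" using all by auto
    then have "a = (\<lambda>z. (b z \<otimes> \<one>) \<otimes> inv (phi' b z))"
      using Sg_inv[OF phi'_SC[OF b(1)]] by (auto simp: SC_iff)
    then show "((\<lambda>_. \<one>, zk), p) \<in> r" unfolding r_def a(1) using rel_iff[OF SC_one a(2)] b(1) by blast
  qed
  have "Qt = {r``{(\<lambda>_. \<one>, zk)}}"
  proof
    show "Qt \<subseteq> {r``{(\<lambda>_. \<one>, zk)}}"
    proof
      fix Xc assume "Xc \<in> Qt"
      then obtain x where x: "Xc = r``{x}" "x \<in> carrier H" unfolding Qt_def by (auto elim: quotientE)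
      then have "r``{(\<lambda>_. \<one>, zk)} = r``{x}" using equiv_class_eq[OF eqv onerel[OF x(2)]] by simp
      then show "Xc \<in> {r``{(\<lambda>_. \<one>, zk)}}" using x by simp
    qed
    show "{r``{(\<lambda>_. \<one>, zk)}} \<subseteq> Qt" unfolding Qt_def using SC_one by (auto intro: quotientI)
  qed
  then have "card (carrier H // twisted_conj H phi) = 1" by (simp add: Qt_def r_def)
  then show ?thesis using True by (simp add: reidemeister_number_def one_enat_def)
qed

end

theorem mainTheorem5:
  fixes G :: "('a, 'b) monoid_scheme" and k :: nat
    and phi :: "(int list \<Rightarrow> 'a) \<times> int list \<Rightarrow> (int list \<Rightarrow> 'a) \<times> int list"
  assumes "comm_group G" and "finite (carrier G)" and "k \<ge> 1"
    and "phi \<in> iso (wreath G k) (wreath G k)"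
    and "\<exists>n>0. \<forall>a \<in> carrier (wreath G k). (phi ^^ n) a = a"
  shows "reidemeister_number (wreath_base G k) phi = 1 \<or>
         reidemeister_number (wreath_base G k) phi = \<infinity>"
proof -
  obtain n where n: "n > 0" "\<forall>a \<in> carrier (wreath G k). (phi ^^ n) a = a" using assms(5) by blast
  have "wsetup G k phi n"
    using assms n by (simp add: wsetup_def wsetup_axioms_def)
  then show ?thesis by (rule wsetup.final)
qed

end
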